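(* Let $R\subset\mathbb R^d$ be a compact connected domain with piecewise smooth boundary and $b$ a boundary asymptotic flow such that $(R,b)$ is flexible. Let $\omega$ be the unique minimizer of $\int_R\sigma(\omega'(x))\,dx$ over $\omega'\in\mathrm{AF}(\Lambda,R,b)$. Then $\omega(x)$ lies in the interior of $\mathcal N(\Lambda)$ for almost every $x$ in the interior of $R$.
   Context: $e_1,\dots,e_D\in\mathbb R^d$ span $\mathbb R^d$ with $\sum e_i=0$ (edge vectors of the lattice $\Lambda$). $\mathcal N(\Lambda)=\mathrm{conv}\{e_1,\dots,e_D\}$, $\sigma(s)=\sup_{\alpha}(s\cdot\alpha-\log\sum_je^{e_j\cdot\alpha})$, which is strictly convex on $\mathcal N(\Lambda)$. An asymptotic flow on $R$ is a measurable vector field supported in $R$, divergence free in the interior of $R$ as a distribution, with values in $\mathcal N(\Lambda)$ a.e.; $T(\omega)=\langle\omega,\xi\rangle d\sigma_{\partial R}$ (extended continuously from smooth flows) is its boundary flux; $b=T(\omega_0)$ for some asymptotic flow $\omega_0$, and $\mathrm{AF}(\Lambda,R,b)=T^{-1}(b)$. $(R,b)$ is flexible if for every point $x$ in the interior of $R$ there are a neighbourhood $U$ of $x$ and $\omega'\in\mathrm{AF}(\Lambda,R,b)$ with $\omega'(y)$ in the interior of $\mathcal N(\Lambda)$ for a.e. $y\in U$. *)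

theory Defs
  imports "HOL-Analysis.Analysis"
begin

text \<open>C-infinity real-valued functions on a set S (intended open): the largest class of
  functions that are continuous and differentiable on S and closed under taking
  directional (Frechet) derivatives.\<close>
definition smooth_on :: "'a::euclidean_space set \<Rightarrow> ('a \<Rightarrow> real) \<Rightarrow> bool" where
  "smooth_on S f \<longleftrightarrow>
     f \<in> gfp (\<lambda>F. {h. continuous_on S h \<and> (\<forall>x\<in>S. h differentiable at x) \<and>
                       (\<forall>v. (\<lambda>x. frechet_derivative h (at x) v) \<in> F)})"

definition smooth_map_on :: "'a::euclidean_space set \<Rightarrow> ('a \<Rightarrow> 'b::euclidean_space) \<Rightarrow> bool" where
  "smooth_map_on S g \<longleftrightarrow> (\<forall>b\<in>Basis. smooth_on S (\<lambda>x. g x \<bullet> b))"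

definition grad :: "('a::euclidean_space \<Rightarrow> real) \<Rightarrow> 'a \<Rightarrow> 'a" where
  "grad \<phi> x = (\<Sum>b\<in>Basis. frechet_derivative \<phi> (at x) b *\<^sub>R b)"

text \<open>Piecewise smooth boundary: the boundary is a finite union of compact pieces, each the
  image of a compact subset of a hyperplane under an injective smooth immersion.\<close>
definition piecewise_smooth_boundary :: "'a::euclidean_space set \<Rightarrow> bool" where
  "piecewise_smooth_boundary R \<longleftrightarrow>
     (\<exists>P :: (('a \<Rightarrow> 'a) \<times> 'a set \<times> 'a) set. finite P \<and>
        frontier R = (\<Union>(g, K, n)\<in>P. g ` K) \<and>
        (\<forall>(g, K, n)\<in>P. norm n = 1 \<and> compact K \<and> K \<subseteq> {x. x \<bullet> n = 0} \<and> inj_on g K \<and>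
           (\<exists>U. open U \<and> K \<subseteq> U \<and> smooth_map_on U g \<and>
              (\<forall>x\<in>K. inj_on (frechet_derivative g (at x)) {v. v \<bullet> n = 0}))))"

text \<open>Newton polytope of the lattice: convex hull of the edge vectors.\<close>
definition newton :: "(nat \<Rightarrow> 'a::euclidean_space) \<Rightarrow> nat \<Rightarrow> 'a set" where
  "newton e D = convex hull (e ` {..<D})"

definition sigma :: "(nat \<Rightarrow> 'a::euclidean_space) \<Rightarrow> nat \<Rightarrow> 'a \<Rightarrow> real" where
  "sigma e D s = (SUP \<alpha>. s \<bullet> \<alpha> - ln (\<Sum>j<D. exp (e j \<bullet> \<alpha>)))"

definition asymptotic_flow ::
  "(nat \<Rightarrow> 'a::euclidean_space) \<Rightarrow> nat \<Rightarrow> 'a set \<Rightarrow> ('a \<Rightarrow> 'a) \<Rightarrow> bool" where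
  "asymptotic_flow e D R \<omega> \<longleftrightarrow>
     \<omega> \<in> borel_measurable lebesgue \<and>
     (\<forall>x. x \<notin> R \<longrightarrow> \<omega> x = 0) \<and>
     (AE x in lebesgue. \<omega> x \<in> newton e D) \<and>
     (\<forall>\<phi>. smooth_on UNIV \<phi> \<and> compact (closure {x. \<phi> x \<noteq> 0}) \<and>
           closure {x. \<phi> x \<noteq> 0} \<subseteq> interior R \<longrightarrow>
           (LINT x|lebesgue. \<omega> x \<bullet> grad \<phi> x) = 0)"

text \<open>Equality of boundary fluxes, expressed weakly: for divergence-free flows on R,
  the pairing of the boundary flux with a smooth function phi equals the integral
  of omega . grad phi over R (divergence theorem).\<close>
definition same_flux :: "'a::euclidean_space set \<Rightarrow> ('a \<Rightarrow> 'a) \<Rightarrow> ('a \<Rightarrow> 'a) \<Rightarrow> bool" where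
  "same_flux R \<omega> \<omega>0 \<longleftrightarrow>
     (\<forall>\<phi>. smooth_on UNIV \<phi> \<longrightarrow>
        (LINT x:R|lebesgue. \<omega> x \<bullet> grad \<phi> x) = (LINT x:R|lebesgue. \<omega>0 x \<bullet> grad \<phi> x))"

text \<open>AF(Lambda, R, b) with b = T(omega0).\<close>
definition AF :: "(nat \<Rightarrow> 'a::euclidean_space) \<Rightarrow> nat \<Rightarrow> 'a set \<Rightarrow> ('a \<Rightarrow> 'a) \<Rightarrow> ('a \<Rightarrow> 'a) set" where
  "AF e D R \<omega>0 = {\<omega>. asymptotic_flow e D R \<omega> \<and> same_flux R \<omega> \<omega>0}"

definition flexible :: "(nat \<Rightarrow> 'a::euclidean_space) \<Rightarrow> nat \<Rightarrow> 'a set \<Rightarrow> ('a \<Rightarrow> 'a) \<Rightarrow> bool" where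
  "flexible e D R \<omega>0 \<longleftrightarrow>
     (\<forall>x\<in>interior R. \<exists>U. open U \<and> x \<in> U \<and>
        (\<exists>\<omega>'\<in>AF e D R \<omega>0. AE y in lebesgue. y \<in> U \<longrightarrow> \<omega>' y \<in> interior (newton e D)))"

end

theory Submission
  imports Defs
begin


definition lse :: "(nat \<Rightarrow> 'a::euclidean_space) \<Rightarrow> nat \<Rightarrow> 'a \<Rightarrow> real" where
  "lse e D \<alpha> = ln (\<Sum>j<D. exp (e j \<bullet> \<alpha>))"

definition ent :: "nat \<Rightarrow> (nat \<Rightarrow> real) \<Rightarrow> real" where
  "ent D p = (\<Sum>j<D. p j * ln (p j))"

definition simw :: "nat \<Rightarrow> (nat \<Rightarrow> real) \<Rightarrow> bool" where
  "simw D p \<longleftrightarrow> (\<forall>j<D. 0 \<le> p j) \<and> (\<Sum>j<D. p j) = 1"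

definition repr :: "(nat \<Rightarrow> 'a::euclidean_space) \<Rightarrow> nat \<Rightarrow> (nat \<Rightarrow> real) \<Rightarrow> 'a" where
  "repr e D p = (\<Sum>j<D. p j *\<^sub>R e j)"

lemma simw_le1: "simw D p \<Longrightarrow> j < D \<Longrightarrow> p j \<le> 1"
proof -
  assume a: "simw D p" "j < D"
  have "p j \<le> sum p {..<D}" by (rule member_le_sum) (use a in \<open>auto simp: simw_def\<close>)
  then show ?thesis using a by (simp add: simw_def)
qed

lemma simw_D: "simw D p \<Longrightarrow> 0 < D"
  unfolding simw_def by (cases D) auto

lemma newton_iff: "s \<in> newton e D \<longleftrightarrow> (\<exists>p. simw D p \<and> s = repr e D p)"
proof
  let ?C = "{s. \<exists>p. simw D p \<and> s = repr e D p}"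
  have cC: "convex ?C"
    unfolding convex_def
  proof (intro ballI allI impI)
    fix x y and u v :: real
    assume "x \<in> ?C" "y \<in> ?C" "0 \<le> u" "0 \<le> v" "u + v = 1"
    then obtain p q where p: "simw D p" "x = repr e D p" and q: "simw D q" "y = repr e D q" by auto
    have "simw D (\<lambda>j. u * p j + v * q j)"
      using p q \<open>0 \<le> u\<close> \<open>0 \<le> v\<close> \<open>u+v=1\<close>
      by (auto simp: simw_def sum.distrib sum_distrib_left[symmetric])
    moreover have "u *\<^sub>R x + v *\<^sub>R y = repr e D (\<lambda>j. u * p j + v * q j)"
      using p q by (simp add: repr_def scaleR_sum_right scaleR_add_left sum.distrib)
    ultimately show "u *\<^sub>R x + v *\<^sub>R y \<in> ?C" by blast
  qed
  have sub: "e ` {..<D} \<subseteq> ?C"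
  proof
    fix x assume "x \<in> e ` {..<D}"
    then obtain i where i: "i < D" "x = e i" by auto
    have "simw D (\<lambda>j. if j = i then 1 else 0)" using i by (auto simp: simw_def)
    moreover have "repr e D (\<lambda>j. if j = i then 1 else 0) = x"
    proof -
      have eqf: "(\<lambda>j. (if j = i then 1 else 0) *\<^sub>R e j) = (\<lambda>j. if j = i then e i else 0)" by auto
      have "repr e D (\<lambda>j. if j = i then 1 else 0) = (\<Sum>j<D. if j = i then e i else 0)"
        by (simp only: repr_def eqf)
      then show ?thesis using i by simp
    qed
    ultimately show "x \<in> ?C" by force
  qed
  show "s \<in> newton e D \<Longrightarrow> \<exists>p. simw D p \<and> s = repr e D p"
    using hull_minimal[of "e ` {..<D}" ?C convex, OF sub cC] unfolding newton_def by blast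
  show "\<exists>p. simw D p \<and> s = repr e D p \<Longrightarrow> s \<in> newton e D"
  proof -
    assume "\<exists>p. simw D p \<and> s = repr e D p"
    then obtain p where p: "simw D p" "s = repr e D p" by auto
    have "(\<Sum>j\<in>{..<D}. p j *\<^sub>R e j) \<in> convex hull (e ` {..<D})"
      apply (rule convex_sum)
      using p by (auto simp: simw_def hull_subset[THEN subsetD])
    then show ?thesis using p by (simp add: newton_def repr_def)
  qed
qed

lemma gibbs:
  fixes a :: "nat \<Rightarrow> real"
  assumes "simw D p"
  shows "(\<Sum>j<D. p j * a j) - ln (\<Sum>j<D. exp (a j)) \<le> ent D p"
proof -
  have D: "0 < D" using simw_D[OF assms] .
  define Z where "Z = (\<Sum>j<D. exp (a j))"
  have Z: "0 < Z" unfolding Z_def using D by (intro sum_pos) auto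
  have trm: "p j * (a j - ln Z - ln (p j)) \<le> exp (a j) / Z - p j" if "j < D" for j
  proof (cases "p j = 0")
    case True then show ?thesis using Z by simp
  next
    case False
    then have pj: "0 < p j" using assms that by (auto simp: simw_def less_le)
    have "a j - ln Z - ln (p j) = ln (exp (a j) / (Z * p j))"
      using Z pj by (simp add: ln_div ln_mult)
    also have "\<dots> \<le> exp (a j) / (Z * p j) - 1"
      using Z pj by (intro ln_le_minus_one) simp
    finally have "p j * (a j - ln Z - ln (p j)) \<le> p j * (exp (a j) / (Z * p j) - 1)"
      using pj by (simp add: mult_left_mono)
    also have "\<dots> = exp (a j) / Z - p j" using pj by (simp add: field_simps)
    finally show ?thesis .
  qed
  have "(\<Sum>j<D. p j * (a j - ln Z - ln (p j))) \<le> (\<Sum>j<D. exp (a j) / Z - p j)"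
    by (intro sum_mono trm) simp
  also have "\<dots> = 0" using Z assms by (simp add: sum_subtractf sum_divide_distrib[symmetric] Z_def simw_def)
  moreover have "(\<Sum>j<D. p j * (a j - ln Z - ln (p j))) = (\<Sum>j<D. p j * a j) - (\<Sum>j<D. p j) * ln Z - ent D p"
    by (simp add: ent_def algebra_simps sum_subtractf sum_distrib_right sum.distrib sum_distrib_left)
  ultimately have "(\<Sum>j<D. p j * a j) - (\<Sum>j<D. p j) * ln Z - ent D p \<le> 0" by linarith
  then show ?thesis using assms by (simp add: simw_def Z_def)
qed

lemma ent_le0: "simw D p \<Longrightarrow> ent D p \<le> 0"
  unfolding ent_def
  apply (rule sum_nonpos)
  subgoal for j using simw_le1[of D p j]
    by (cases "p j = 0") (auto simp: simw_def less_le intro!: mult_nonneg_nonpos)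
  done

lemma val_le_ent:
  assumes "simw D p" "s = repr e D p"
  shows "s \<bullet> \<alpha> - lse e D \<alpha> \<le> ent D p"
proof -
  have "s \<bullet> \<alpha> = (\<Sum>j<D. p j * (e j \<bullet> \<alpha>))"
    using assms by (simp add: repr_def inner_sum_left)
  then show ?thesis using gibbs[OF assms(1), of "\<lambda>j. e j \<bullet> \<alpha>"] by (simp add: lse_def)
qed

lemma sigma_alt: "sigma e D s = (SUP \<alpha>. s \<bullet> \<alpha> - lse e D \<alpha>)"
  by (simp add: sigma_def lse_def)

lemma bdd_sig:
  assumes "s \<in> newton e D"
  shows "bdd_above (range (\<lambda>\<alpha>. s \<bullet> \<alpha> - lse e D \<alpha>))"
proof -
  obtain p where p: "simw D p" "s = repr e D p" using assms newton_iff by blast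
  show ?thesis
  proof (rule bdd_aboveI[of _ 0])
    fix x assume "x \<in> range (\<lambda>\<alpha>. s \<bullet> \<alpha> - lse e D \<alpha>)"
    then obtain \<alpha> where "x = s \<bullet> \<alpha> - lse e D \<alpha>" by auto
    then show "x \<le> 0" using val_le_ent[OF p, of \<alpha>] ent_le0[OF p(1)] by simp
  qed
qed

lemma sigma_ge_val: "s \<in> newton e D \<Longrightarrow> s \<bullet> \<alpha> - lse e D \<alpha> \<le> sigma e D s"
  unfolding sigma_alt by (rule cSUP_upper[OF _ bdd_sig]) auto

lemma sigma_le_ent:
  assumes "simw D p" "s = repr e D p"
  shows "sigma e D s \<le> ent D p"
  unfolding sigma_alt by (rule cSUP_least) (use val_le_ent[OF assms] in auto)

lemma sigma_le0: "s \<in> newton e D \<Longrightarrow> sigma e D s \<le> 0"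
  using sigma_le_ent ent_le0 newton_iff by (metis order_trans)

lemma sigma_ge: "s \<in> newton e D \<Longrightarrow> - ln (real D) \<le> sigma e D s"
  using sigma_ge_val[of s e D 0] by (simp add: lse_def)

lemma sigma_convex:
  assumes "s \<in> newton e D" "s' \<in> newton e D" "0 \<le> t" "t \<le> 1"
  shows "sigma e D ((1 - t) *\<^sub>R s + t *\<^sub>R s') \<le> (1 - t) * sigma e D s + t * sigma e D s'"
  unfolding sigma_alt[of e D "(1 - t) *\<^sub>R s + t *\<^sub>R s'"]
proof (rule cSUP_least)
  fix \<alpha>
  have "((1 - t) *\<^sub>R s + t *\<^sub>R s') \<bullet> \<alpha> - lse e D \<alpha>
      = (1 - t) * (s \<bullet> \<alpha> - lse e D \<alpha>) + t * (s' \<bullet> \<alpha> - lse e D \<alpha>)"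
    by (simp add: inner_add_left algebra_simps)
  also have "\<dots> \<le> (1 - t) * sigma e D s + t * sigma e D s'"
    using assms sigma_ge_val[OF assms(1)] sigma_ge_val[OF assms(2)]
    by (intro add_mono mult_left_mono) auto
  finally show "((1 - t) *\<^sub>R s + t *\<^sub>R s') \<bullet> \<alpha> - lse e D \<alpha> \<le> (1 - t) * sigma e D s + t * sigma e D s'" .
qed simp



lemma approx_opt:
  fixes e :: "nat \<Rightarrow> 'a::euclidean_space"
  assumes sN: "s \<in> newton e D" and eta: "0 < \<eta>"
  shows "\<exists>p. simw D p \<and> ent D p \<le> sigma e D s \<and> norm (repr e D p - s) \<le> \<eta>"
proof -
  obtain p0 where p0: "simw D p0" "s = repr e D p0" using sN newton_iff by blast
  have D: "0 < D" using simw_D[OF p0(1)] .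
  define c where "c = ln (real D)"
  have c0: "0 \<le> c" using D by (simp add: c_def)
  define \<epsilon> where "\<epsilon> = \<eta>\<^sup>2 / (2 * c + 1)"
  have eps: "0 < \<epsilon>" using eta c0 by (simp add: \<epsilon>_def)
  define f where "f \<alpha> = s \<bullet> \<alpha> - lse e D \<alpha> - \<epsilon> / 2 * (norm \<alpha>)\<^sup>2" for \<alpha>
  have Zpos: "0 < (\<Sum>j<D. exp (e j \<bullet> \<alpha>))" for \<alpha> using D by (intro sum_pos) auto
  have val0: "s \<bullet> \<alpha> - lse e D \<alpha> \<le> 0" for \<alpha>
    using val_le_ent[OF p0] ent_le0[OF p0(1)] by (meson order_trans)
  have f0: "f 0 = - c" by (simp add: f_def lse_def c_def)
  have contf: "continuous_on UNIV f"
    unfolding f_def lse_def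
    by (intro continuous_intros) (use Zpos in \<open>auto simp: less_imp_neq[symmetric]\<close>)
  define r where "r = sqrt ((2 * c + 2) / \<epsilon>)"
  obtain \<alpha>0 where a0: "\<alpha>0 \<in> cball 0 r" "\<forall>y\<in>cball 0 r. f y \<le> f \<alpha>0"
  proof -
    have "continuous_on (cball 0 r) f" using contf continuous_on_subset by blast
    moreover have "cball 0 r \<noteq> {}" using eps c0 by (simp add: r_def not_less)
    ultimately show ?thesis using continuous_attains_sup[of "cball 0 r" f] that by auto
  qed
  have r0: "0 \<le> r" using eps c0 by (simp add: r_def)
  have fmax: "f \<beta> \<le> f \<alpha>0" for \<beta>
  proof (cases "\<beta> \<in> cball 0 r")
    case True then show ?thesis using a0 by auto
  next
    case False
    then have "r < norm \<beta>" by simp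
    then have "r\<^sup>2 < (norm \<beta>)\<^sup>2" using r0 by (simp add: power_strict_mono)
    then have "(2 * c + 2) / \<epsilon> < (norm \<beta>)\<^sup>2" using eps c0 by (simp add: r_def)
    then have "2 * c + 2 < \<epsilon> * (norm \<beta>)\<^sup>2" using eps by (simp add: field_simps)
    then have "f \<beta> < - c" using val0[of \<beta>] unfolding f_def by linarith
    also have "- c \<le> f \<alpha>0" using a0 r0 f0 by (metis centre_in_cball)
    finally show ?thesis by simp
  qed
  define Z where "Z = (\<Sum>j<D. exp (e j \<bullet> \<alpha>0))"
  have Z: "0 < Z" using Zpos by (simp add: Z_def)
  define p where "p j = exp (e j \<bullet> \<alpha>0) / Z" for j
  have simp_p: "simw D p"
    unfolding simw_def p_def using Z by (auto simp: sum_divide_distrib[symmetric] Z_def)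
  define g where "g = s - repr e D p - \<epsilon> *\<^sub>R \<alpha>0"
  define \<phi> where "\<phi> \<tau> = f (\<alpha>0 + \<tau> *\<^sub>R g)" for \<tau>
  have phi_eq: "\<phi> \<tau> = (s \<bullet> \<alpha>0 + \<tau> * (s \<bullet> g)) - ln (\<Sum>j<D. exp (e j \<bullet> \<alpha>0 + \<tau> * (e j \<bullet> g)))
      - \<epsilon> / 2 * (\<alpha>0 \<bullet> \<alpha>0 + 2 * \<tau> * (\<alpha>0 \<bullet> g) + \<tau>\<^sup>2 * (g \<bullet> g))" for \<tau>
  proof -
    have n: "(norm (\<alpha>0 + \<tau> *\<^sub>R g))\<^sup>2 = \<alpha>0 \<bullet> \<alpha>0 + 2 * \<tau> * (\<alpha>0 \<bullet> g) + \<tau>\<^sup>2 * (g \<bullet> g)"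
      unfolding power2_norm_eq_inner by (simp add: inner_add_right inner_add_left inner_commute power2_eq_square algebra_simps)
    show ?thesis unfolding \<phi>_def f_def lse_def n
      by (simp add: inner_add_right algebra_simps)
  qed
  have der: "(\<phi> has_real_derivative (s \<bullet> g - (\<Sum>j<D. exp (e j \<bullet> \<alpha>0) * (e j \<bullet> g)) / Z - \<epsilon> * (\<alpha>0 \<bullet> g))) (at 0)"
  proof -
    have "((\<lambda>\<tau>. (s \<bullet> \<alpha>0 + \<tau> * (s \<bullet> g)) - ln (\<Sum>j<D. exp (e j \<bullet> \<alpha>0 + \<tau> * (e j \<bullet> g)))
      - \<epsilon> / 2 * (\<alpha>0 \<bullet> \<alpha>0 + 2 * \<tau> * (\<alpha>0 \<bullet> g) + \<tau>\<^sup>2 * (g \<bullet> g))) has_real_derivative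
      (s \<bullet> g - (\<Sum>j<D. exp (e j \<bullet> \<alpha>0) * (e j \<bullet> g)) / Z - \<epsilon> * (\<alpha>0 \<bullet> g))) (at 0)"
    proof -
      have d1: "((\<lambda>\<tau>. \<Sum>j<D. exp (e j \<bullet> \<alpha>0 + \<tau> * (e j \<bullet> g))) has_real_derivative
          (\<Sum>j<D. exp (e j \<bullet> \<alpha>0) * (e j \<bullet> g))) (at 0)"
        apply (rule DERIV_sum)
        apply (rule derivative_eq_intros refl)+
        apply simp
        done
      have d2: "((\<lambda>\<tau>. ln (\<Sum>j<D. exp (e j \<bullet> \<alpha>0 + \<tau> * (e j \<bullet> g)))) has_real_derivative
          (\<Sum>j<D. exp (e j \<bullet> \<alpha>0) * (e j \<bullet> g)) / Z) (at 0)"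
        using DERIV_chain2[OF DERIV_ln_divide d1] Z by (simp add: Z_def)
      have d3: "((\<lambda>\<tau>. (s \<bullet> \<alpha>0 + \<tau> * (s \<bullet> g)) - \<epsilon> / 2 * (\<alpha>0 \<bullet> \<alpha>0 + 2 * \<tau> * (\<alpha>0 \<bullet> g) + \<tau>\<^sup>2 * (g \<bullet> g)))
          has_real_derivative (s \<bullet> g - \<epsilon> * (\<alpha>0 \<bullet> g))) (at 0)"
        by (rule derivative_eq_intros refl | simp)+
      show ?thesis using DERIV_diff[OF d3 d2] by (simp add: algebra_simps)
    qed
    moreover have "\<phi> = (\<lambda>\<tau>. (s \<bullet> \<alpha>0 + \<tau> * (s \<bullet> g)) - ln (\<Sum>j<D. exp (e j \<bullet> \<alpha>0 + \<tau> * (e j \<bullet> g)))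
      - \<epsilon> / 2 * (\<alpha>0 \<bullet> \<alpha>0 + 2 * \<tau> * (\<alpha>0 \<bullet> g) + \<tau>\<^sup>2 * (g \<bullet> g)))"
      using phi_eq by (rule ext)
    ultimately show ?thesis by simp
  qed
  have "s \<bullet> g - (\<Sum>j<D. exp (e j \<bullet> \<alpha>0) * (e j \<bullet> g)) / Z - \<epsilon> * (\<alpha>0 \<bullet> g) = g \<bullet> g"
  proof -
    have "repr e D p \<bullet> g = (\<Sum>j<D. exp (e j \<bullet> \<alpha>0) * (e j \<bullet> g)) / Z"
      by (simp add: repr_def inner_sum_left p_def sum_divide_distrib)
    then show ?thesis by (simp add: g_def inner_diff_left)
  qed
  moreover have "s \<bullet> g - (\<Sum>j<D. exp (e j \<bullet> \<alpha>0) * (e j \<bullet> g)) / Z - \<epsilon> * (\<alpha>0 \<bullet> g) = 0"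
    by (rule DERIV_local_max[OF der, of 1]) (auto simp: \<phi>_def fmax)
  ultimately have "g = 0" by simp
  then have rep: "repr e D p = s - \<epsilon> *\<^sub>R \<alpha>0" by (simp add: g_def algebra_simps)
  have ent_eq: "ent D p = repr e D p \<bullet> \<alpha>0 - lse e D \<alpha>0"
  proof -
    have "ent D p = (\<Sum>j<D. p j * (e j \<bullet> \<alpha>0 - ln Z))"
      unfolding ent_def by (rule sum.cong) (use Z in \<open>auto simp: p_def ln_div\<close>)
    also have "\<dots> = (\<Sum>j<D. p j * (e j \<bullet> \<alpha>0)) - (\<Sum>j<D. p j) * ln Z"
      by (simp add: algebra_simps sum_subtractf sum_distrib_right sum_distrib_left)
    also have "\<dots> = repr e D p \<bullet> \<alpha>0 - lse e D \<alpha>0"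
      using simp_p by (simp add: simw_def repr_def inner_sum_left lse_def Z_def)
    finally show ?thesis .
  qed
  have fa0: "f \<alpha>0 = ent D p + \<epsilon> / 2 * (norm \<alpha>0)\<^sup>2"
    unfolding f_def ent_eq rep by (simp add: inner_diff_left power2_norm_eq_inner algebra_simps)
  have "ent D p \<le> f \<alpha>0" using fa0 eps by simp
  also have "f \<alpha>0 \<le> s \<bullet> \<alpha>0 - lse e D \<alpha>0" using eps by (simp add: f_def)
  also have "\<dots> \<le> sigma e D s" by (rule sigma_ge_val[OF sN])
  finally have H: "ent D p \<le> sigma e D s" .
  have "- c \<le> f \<alpha>0" using fmax[of 0] f0 by simp
  then have "\<epsilon> / 2 * (norm \<alpha>0)\<^sup>2 \<le> c" using val0[of \<alpha>0] unfolding f_def by linarith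
  then have "\<epsilon> * (norm \<alpha>0)\<^sup>2 \<le> 2 * c" by simp
  then have "\<epsilon> * (\<epsilon> * (norm \<alpha>0)\<^sup>2) \<le> \<epsilon> * (2 * c)" using eps by (intro mult_left_mono) auto
  also have "\<dots> \<le> \<eta>\<^sup>2" using c0 eta by (simp add: \<epsilon>_def field_simps)
  finally have "(norm (\<epsilon> *\<^sub>R \<alpha>0))\<^sup>2 \<le> \<eta>\<^sup>2" using eps by (simp add: power_mult_distrib power2_eq_square algebra_simps)
  then have "norm (\<epsilon> *\<^sub>R \<alpha>0) \<le> \<eta>" using eta by (simp add: power2_le_iff_abs_le)
  then have "norm (repr e D p - s) \<le> \<eta>" using rep by simp
  then show ?thesis using simp_p H by blast
qed



lemma phi_tangent:
  fixes x y :: real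
  assumes "0 < y" "0 \<le> x"
  shows "y * ln y + (ln y + 1) * (x - y) \<le> x * ln x"
proof (cases "x = 0")
  case True then show ?thesis using assms by (simp add: algebra_simps)
next
  case False
  then have x: "0 < x" using assms by simp
  have "1 - y / x \<le> ln (x / y)"
    using ln_le_minus_one[of "y / x"] x assms by (simp add: ln_div)
  then have "x * (1 - y / x) \<le> x * ln (x / y)" using x by (simp add: mult_left_mono)
  moreover have "x * (1 - y / x) = x - y" using x by (simp add: field_simps)
  moreover have "x * ln (x / y) = x * ln x - x * ln y" using x assms by (simp add: ln_div algebra_simps)
  ultimately have "x - y \<le> x * ln x - x * ln y" by simp
  then show ?thesis by (simp add: algebra_simps)
qed

lemma phi_conv:
  fixes a b t :: real
  assumes "0 \<le> a" "0 \<le> b" "0 \<le> t" "t \<le> 1" "0 < (1 - t) * a + t * b"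
  shows "((1 - t) * a + t * b) * ln ((1 - t) * a + t * b) \<le> (1 - t) * (a * ln a) + t * (b * ln b)"
proof -
  define y where "y = (1 - t) * a + t * b"
  have y: "0 < y" using assms by (simp add: y_def)
  have 1: "y * ln y + (ln y + 1) * (a - y) \<le> a * ln a" by (rule phi_tangent[OF y assms(1)])
  have 2: "y * ln y + (ln y + 1) * (b - y) \<le> b * ln b" by (rule phi_tangent[OF y assms(2)])
  have "(1 - t) * (y * ln y + (ln y + 1) * (a - y)) + t * (y * ln y + (ln y + 1) * (b - y))
      \<le> (1 - t) * (a * ln a) + t * (b * ln b)"
    using 1 2 assms by (intro add_mono mult_left_mono) auto
  moreover have "(1 - t) * (y * ln y + (ln y + 1) * (a - y)) + t * (y * ln y + (ln y + 1) * (b - y)) = y * ln y"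
    by (simp add: y_def algebra_simps)
  ultimately show ?thesis by (simp add: y_def)
qed

lemma phi_ge: "0 \<le> (a::real) \<Longrightarrow> a - 1 \<le> a * ln a"
  using phi_tangent[of 1 a] by simp

lemma phi_le0: "0 \<le> (b::real) \<Longrightarrow> b \<le> 1 \<Longrightarrow> b * ln b \<le> 0"
  by (cases "b = 0") (auto intro!: mult_nonneg_nonpos)

lemma phi_small:
  fixes a :: real
  assumes "0 \<le> a"
  shows "- (a * ln a) \<le> 2 * sqrt a"
proof (cases "a = 0")
  case True then show ?thesis by simp
next
  case False
  then have a: "0 < a" using assms by simp
  have sa: "0 < sqrt a" using a by simp
  have "ln (inverse (sqrt a)) \<le> inverse (sqrt a) - 1" using sa by (intro ln_le_minus_one) simp
  moreover have "ln a = 2 * ln (sqrt a)" using a by (simp add: ln_sqrt)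
  moreover have "ln (inverse (sqrt a)) = - ln (sqrt a)" using sa by (simp add: ln_inverse)
  ultimately have "- ln a \<le> 2 * inverse (sqrt a) - 2" by linarith
  then have "a * (- ln a) \<le> a * (2 * inverse (sqrt a) - 2)" using a by (intro mult_left_mono) auto
  also have "\<dots> = 2 * sqrt a - 2 * a" using a sa
  proof -
    have "a * inverse (sqrt a) = sqrt a" using a by (metis divide_inverse real_div_sqrt less_imp_le)
    then show ?thesis by (simp add: algebra_simps)
  qed
  finally show ?thesis using a by (simp add: algebra_simps)
qed

lemma phi_j0:
  fixes a b t c0 :: real
  assumes "0 \<le> a" "a \<le> t" "c0 \<le> b" "b \<le> 1" "0 < c0" "0 < t" "2 * t < 1"
  shows "((1 - t) * a + t * b) * ln ((1 - t) * a + t * b) \<le> t * c0 * ln (2 * t)"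
proof -
  define y where "y = (1 - t) * a + t * b"
  have "t * c0 \<le> t * b" using assms by (simp add: mult_left_mono)
  moreover have "0 \<le> (1 - t) * a" using assms by simp
  ultimately have yl: "t * c0 \<le> y" by (simp add: y_def)
  have y0: "0 < y" using yl assms by (metis mult_pos_pos order_less_le_trans)
  have "(1 - t) * a \<le> a" using assms by (simp add: algebra_simps)
  moreover have tb: "t * b \<le> t" using assms mult_left_le[of b t] by simp
  ultimately have yu: "y \<le> 2 * t" using assms unfolding y_def by linarith
  have l: "ln y \<le> ln (2 * t)" using y0 yu by simp
  have l0: "ln (2 * t) \<le> 0" using assms by simp
  have "y * ln y \<le> y * ln (2 * t)" using l y0 by (simp add: mult_left_mono)
  also have "\<dots> \<le> t * c0 * ln (2 * t)" using yl l0 by (simp add: mult_right_mono_neg)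
  finally show ?thesis by (simp add: y_def)
qed



lemma newton_convex: "convex (newton e D)"
  unfolding newton_def by (rule convex_convex_hull)

lemma e_in_newton: "j < D \<Longrightarrow> e j \<in> newton e D"
  unfolding newton_def by (rule hull_inc) auto

lemma zero_in_newton:
  assumes "(\<Sum>i<D. e i) = 0" "0 < D"
  shows "0 \<in> newton e D"
proof -
  have "simw D (\<lambda>j. 1 / real D)" using assms by (simp add: simw_def)
  moreover have "repr e D (\<lambda>j. 1 / real D) = 0"
    using assms by (simp add: repr_def scaleR_sum_right[symmetric])
  ultimately show ?thesis using newton_iff by metis
qed

lemma exists_j0:
  fixes e :: "nat \<Rightarrow> 'a::euclidean_space"
  assumes span_e: "span (e ` {..<D}) = UNIV" and sum_e: "(\<Sum>i<D. e i) = 0"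
    and v: "v \<noteq> 0" and le: "\<And>j. j < D \<Longrightarrow> e j \<bullet> v \<le> M"
  shows "\<exists>j<D. e j \<bullet> v < M"
proof (rule ccontr)
  assume "\<not> (\<exists>j<D. e j \<bullet> v < M)"
  then have eq: "\<And>j. j < D \<Longrightarrow> e j \<bullet> v = M" using le by (meson not_less order_antisym)
  have "0 = (\<Sum>i<D. e i) \<bullet> v" using sum_e by simp
  also have "\<dots> = real D * M" using eq by (simp add: inner_sum_left)
  finally have "real D * M = 0" by simp
  show False
  proof (cases "D = 0")
    case True
    then have "span (e ` {..<D}) = {0}" by simp
    then show False using span_e v by (metis UNIV_I singletonD)
  next
    case False
    then have M: "M = 0" using \<open>real D * M = 0\<close> by simp
    have "orthogonal v v"
      by (rule orthogonal_to_span[of v "e ` {..<D}"]) (use span_e eq M in \<open>auto simp: orthogonal_def inner_commute\<close>)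
    then show False using v by (simp add: orthogonal_def)
  qed
qed

lemma rep_near:
  fixes e :: "nat \<Rightarrow> 'a::euclidean_space"
  assumes sum_e: "(\<Sum>i<D. e i) = 0" and s': "s' \<in> interior (newton e D)"
  shows "\<exists>\<rho>>0. \<exists>c0>0. \<forall>y. norm (y - s') \<le> \<rho> \<longrightarrow>
            (\<exists>q. simw D q \<and> repr e D q = y \<and> (\<forall>j<D. c0 \<le> q j))"
proof -
  obtain r where r: "0 < r" "cball s' r \<subseteq> newton e D"
    using s' open_interior open_contains_cball interior_subset by (metis subset_trans)
  have "s' \<in> newton e D" using s' interior_subset by blast
  then obtain p0 where "simw D p0" using newton_iff by blast
  then have D: "0 < D" by (rule simw_D)
  define lam where "lam = min (1/2) (r / (4 * (norm s' + 1)))"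
  have "0 < r / (4 * (norm s' + 1))" using r by (intro divide_pos_pos) (auto intro: add_nonneg_pos)
  then have l0: "0 < lam" "lam \<le> 1/2" unfolding lam_def by (simp, linarith)
  have ls: "lam * norm s' \<le> r / 4"
  proof -
    have "lam * norm s' \<le> (r / (4 * (norm s' + 1))) * norm s'"
      by (intro mult_right_mono) (auto simp: lam_def)
    also have "\<dots> \<le> (r / (4 * (norm s' + 1))) * (norm s' + 1)"
      using r by (intro mult_left_mono) auto
    also have "\<dots> = r / 4" 
    proof -
      have nz: "norm s' + 1 \<noteq> 0" using norm_ge_zero[of s'] by linarith
      show ?thesis using nz by (simp add: field_simps)
    qed
    finally show ?thesis .
  qed
  have key: "\<exists>q. simw D q \<and> repr e D q = y \<and> (\<forall>j<D. lam / real D \<le> q j)"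
    if y: "norm (y - s') \<le> r / 4" for y
  proof -
    define z where "z = (1 / (1 - lam)) *\<^sub>R y"
    have "z - s' = (1 / (1 - lam)) *\<^sub>R ((y - s') + lam *\<^sub>R s')"
    proof -
      have "(y - s') + lam *\<^sub>R s' = y - (1 - lam) *\<^sub>R s'" by (simp add: algebra_simps)
      moreover have "(1 / (1 - lam)) *\<^sub>R ((1 - lam) *\<^sub>R s') = s'" using l0 by simp
      ultimately have "(1 / (1 - lam)) *\<^sub>R ((y - s') + lam *\<^sub>R s') = (1 / (1 - lam)) *\<^sub>R y - s'"
        by (simp only: scaleR_diff_right)
      then show ?thesis unfolding z_def by simp
    qed
    then have "norm (z - s') = (1 / (1 - lam)) * norm ((y - s') + lam *\<^sub>R s')" using l0 by simp
    also have "\<dots> \<le> 2 * (norm (y - s') + lam * norm s')"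
    proof -
      have "norm ((y - s') + lam *\<^sub>R s') \<le> norm (y - s') + lam * norm s'"
        using norm_triangle_ineq[of "y - s'" "lam *\<^sub>R s'"] l0 by simp
      moreover have "1 / (1 - lam) \<le> 2" using l0 by (simp add: field_simps)
      ultimately show ?thesis
        by (intro mult_mono) auto
    qed
    also have "\<dots> \<le> r" using y ls by simp
    finally have "z \<in> newton e D" using r by (auto simp: dist_norm norm_minus_commute)
    then obtain p where p: "simw D p" "z = repr e D p" using newton_iff by blast
    define q where "q j = (1 - lam) * p j + lam / real D" for j
    have "simw D q" using p l0 D
      by (auto simp: simw_def q_def sum.distrib sum_distrib_left[symmetric])
    moreover have "repr e D q = y"
    proof -
      have "repr e D q = (1 - lam) *\<^sub>R repr e D p + (lam / real D) *\<^sub>R (\<Sum>j<D. e j)"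
        by (simp add: repr_def q_def scaleR_add_left sum.distrib scaleR_sum_right)
      also have "\<dots> = (1 - lam) *\<^sub>R z" using sum_e p by simp
      also have "\<dots> = y" using l0 by (simp add: z_def)
      finally show ?thesis .
    qed
    moreover have "\<forall>j<D. lam / real D \<le> q j" using p l0 by (auto simp: q_def simw_def)
    ultimately show "\<exists>q. simw D q \<and> repr e D q = y \<and> (\<forall>j<D. lam / real D \<le> q j)" by blast
  qed
  have "0 < r / 4" using r by simp
  moreover have "0 < lam / real D" using l0 D by simp
  ultimately show ?thesis using key by blast
qed



lemma inf_slope:
  fixes e :: "nat \<Rightarrow> 'a::euclidean_space"
  assumes span_e: "span (e ` {..<D}) = UNIV" and sum_e: "(\<Sum>i<D. e i) = 0"
    and sN: "s \<in> newton e D" and sI: "s \<notin> interior (newton e D)"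
    and s': "s' \<in> interior (newton e D)"
  shows "\<exists>t0>0. \<forall>t. 0 < t \<and> t \<le> t0 \<longrightarrow>
           sigma e D ((1 - t) *\<^sub>R s + t *\<^sub>R s') \<le> sigma e D s - K * t"
proof -
  let ?N = "newton e D"
  have intne: "interior ?N \<noteq> {}" using s' by auto
  have "s \<notin> rel_interior ?N" using sI rel_interior_nonempty_interior[OF intne] by simp
  then obtain a where a: "a \<noteq> 0" "\<And>y. y \<in> ?N \<Longrightarrow> a \<bullet> s \<le> a \<bullet> y"
    using supporting_hyperplane_rel_boundary[OF newton_convex sN] by metis
  define v where "v = - a"
  have v: "v \<noteq> 0" using a by (simp add: v_def)
  have vle: "\<And>y. y \<in> ?N \<Longrightarrow> v \<bullet> y \<le> v \<bullet> s" using a by (simp add: v_def)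
  obtain j0 where j0: "j0 < D" "e j0 \<bullet> v < v \<bullet> s"
    using exists_j0[OF span_e sum_e v, of "v \<bullet> s"] vle e_in_newton by (metis inner_commute)
  define \<delta> where "\<delta> = v \<bullet> s - e j0 \<bullet> v"
  have \<delta>: "0 < \<delta>" using j0 by (simp add: \<delta>_def)
  obtain \<rho> c0 where rc: "0 < \<rho>" "0 < c0"
    and rep: "\<And>y. norm (y - s') \<le> \<rho> \<Longrightarrow> \<exists>q. simw D q \<and> repr e D q = y \<and> (\<forall>j<D. c0 \<le> q j)"
    using rep_near[OF sum_e s'] by metis
  define t0 where "t0 = min (1/4) (exp (- (K + real D) / c0) / 2)"
  have t00: "0 < t0" by (simp add: t0_def)
  have main: "sigma e D ((1 - t) *\<^sub>R s + t *\<^sub>R s') \<le> sigma e D s - K * t"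
    if t: "0 < t" "t \<le> t0" for t
  proof -
    have t4: "t \<le> 1/4" using t by (simp add: t0_def)
    have "2 * t \<le> exp (- (K + real D) / c0)" using t by (simp add: t0_def)
    then have "ln (2 * t) \<le> ln (exp (- (K + real D) / c0))" using t by (subst ln_le_cancel_iff) auto
    then have "ln (2 * t) \<le> - (K + real D) / c0" by simp
    then have lnt: "c0 * ln (2 * t) \<le> - (K + real D)" using rc by (simp add: field_simps)
    define \<eta> where "\<eta> = min (t * \<rho>) (t\<^sup>2 * \<delta> / (4 * (norm v + 1)))"
    have eta: "0 < \<eta>" using t rc \<delta> by (simp add: \<eta>_def add_nonneg_pos)
    obtain p where p: "simw D p" "ent D p \<le> sigma e D s" "norm (repr e D p - s) \<le> \<eta>"
      using approx_opt[OF sN eta] by blast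
    define sp where "sp = repr e D p"
    define y where "y = s' + ((1 - t) / t) *\<^sub>R (s - sp)"
    have "norm (y - s') = ((1 - t) / t) * norm (s - sp)" using t t4 by (simp add: y_def)
    also have "\<dots> \<le> (1 / t) * \<eta>"
      using p(3) t t4 by (intro mult_mono) (auto simp: sp_def norm_minus_commute divide_right_mono)
    also have "\<dots> \<le> \<rho>" using t by (simp add: \<eta>_def field_simps)
    finally obtain q where q: "simw D q" "repr e D q = y" "\<forall>j<D. c0 \<le> q j" using rep by blast
    define r where "r j = (1 - t) * p j + t * q j" for j
    have simr: "simw D r" using p q t t4
      by (auto simp: simw_def r_def sum.distrib sum_distrib_left[symmetric])
    have "repr e D r = (1 - t) *\<^sub>R sp + t *\<^sub>R y"
      by (simp add: repr_def r_def sp_def scaleR_add_left sum.distrib scaleR_sum_right q(2)[symmetric])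
    also have "\<dots> = (1 - t) *\<^sub>R s + t *\<^sub>R s'"
    proof -
      have "t *\<^sub>R (((1 - t) / t) *\<^sub>R (s - sp)) = (1 - t) *\<^sub>R (s - sp)" using t by simp
      then show ?thesis unfolding y_def scaleR_add_right by (simp add: algebra_simps)
    qed
    finally have repr_r: "repr e D r = (1 - t) *\<^sub>R s + t *\<^sub>R s'" .
    have pj0: "p j0 \<le> t\<^sup>2 / 4"
    proof -
      have "\<delta> * p j0 \<le> (\<Sum>j<D. p j * (v \<bullet> s - e j \<bullet> v))"
      proof -
        have "\<delta> * p j0 = p j0 * (v \<bullet> s - e j0 \<bullet> v)" by (simp add: \<delta>_def)
        also have "\<dots> \<le> (\<Sum>j<D. p j * (v \<bullet> s - e j \<bullet> v))"
          by (rule member_le_sum[of j0 "{..<D}" "\<lambda>j. p j * (v \<bullet> s - e j \<bullet> v)"])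
             (use j0 p vle[OF e_in_newton] in \<open>auto simp: simw_def inner_commute intro!: mult_nonneg_nonneg\<close>)
        finally show ?thesis .
      qed
      also have "\<dots> = v \<bullet> s - v \<bullet> sp"
        using p(1) by (simp add: sp_def repr_def inner_sum_right algebra_simps sum_subtractf
            sum_distrib_right[symmetric] simw_def inner_commute)
      also have "\<dots> = v \<bullet> (s - sp)" by (simp add: inner_diff_right)
      also have "\<dots> \<le> norm v * norm (s - sp)" by (rule order_trans[OF abs_ge_self Cauchy_Schwarz_ineq2])
      also have "\<dots> \<le> norm v * (t\<^sup>2 * \<delta> / (4 * (norm v + 1)))"
        using p(3) by (intro mult_left_mono) (auto simp: sp_def norm_minus_commute \<eta>_def)
      also have "\<dots> \<le> t\<^sup>2 * \<delta> / 4"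
      proof -
        have "norm v / (norm v + 1) \<le> 1" by (simp add: divide_le_eq_1 add_nonneg_pos)
        then have "(t\<^sup>2 * \<delta> / 4) * (norm v / (norm v + 1)) \<le> (t\<^sup>2 * \<delta> / 4) * 1"
          using \<delta> by (intro mult_left_mono) auto
        then show ?thesis by (simp add: field_simps)
      qed
      finally show ?thesis using \<delta> by (simp add: field_simps)
    qed
    have "t * t \<le> t * 1" using t t4 by (intro mult_left_mono) auto
    moreover have "0 \<le> t * t" by simp
    moreover have "p j0 \<le> t * t / 4" using pj0 by (simp add: power2_eq_square)
    ultimately have pj0': "p j0 \<le> t" by linarith
    have sq: "2 * sqrt (p j0) \<le> t"
    proof -
      have "sqrt (p j0) \<le> sqrt (t\<^sup>2 / 4)" using pj0 by simp
      also have "\<dots> = t / 2" using t by (simp add: real_sqrt_divide)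
      finally show ?thesis by simp
    qed
    have pjge: "\<And>j. j < D \<Longrightarrow> 0 \<le> p j" using p by (simp add: simw_def)
    have pjle: "\<And>j. j < D \<Longrightarrow> p j \<le> 1" using p simw_le1 by blast
    have qjle: "\<And>j. j < D \<Longrightarrow> q j \<le> 1" using q simw_le1 by blast
    have gen: "r j * ln (r j) - p j * ln (p j) \<le> t" if j: "j < D" for j
    proof -
      have qj: "c0 \<le> q j" using q j by auto
      have rpos: "0 < r j" unfolding r_def using t t4 rc qj pjge[OF j]
        by (intro add_nonneg_pos) (auto intro: mult_pos_pos)
      have "r j * ln (r j) \<le> (1 - t) * (p j * ln (p j)) + t * (q j * ln (q j))"
        unfolding r_def by (rule phi_conv) (use pjge[OF j] qj rc t t4 rpos in \<open>auto simp: r_def\<close>)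
      moreover have "q j * ln (q j) \<le> 0" using qj rc qjle[OF j] by (intro phi_le0) auto
      moreover have "p j - 1 \<le> p j * ln (p j)" using pjge[OF j] by (rule phi_ge)
      ultimately have "r j * ln (r j) - p j * ln (p j) \<le> t * (q j * ln (q j) - p j * ln (p j))"
        by (simp add: algebra_simps)
      also have "\<dots> \<le> t * 1"
        using \<open>q j * ln (q j) \<le> 0\<close> \<open>p j - 1 \<le> p j * ln (p j)\<close> pjge[OF j] t
        by (intro mult_left_mono) auto
      finally show ?thesis by simp
    qed
    have spec: "r j0 * ln (r j0) - p j0 * ln (p j0) \<le> t * c0 * ln (2 * t) + t"
    proof -
      have "r j0 * ln (r j0) \<le> t * c0 * ln (2 * t)"
        unfolding r_def by (rule phi_j0) (use pjge[OF j0(1)] pj0' q j0 qjle[OF j0(1)] rc t t4 in auto)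
      moreover have "- (p j0 * ln (p j0)) \<le> 2 * sqrt (p j0)" using pjge[OF j0(1)] by (rule phi_small)
      ultimately show ?thesis using sq by linarith
    qed
    have "ent D r - ent D p = (\<Sum>j<D. r j * ln (r j) - p j * ln (p j))"
      by (simp add: ent_def sum_subtractf)
    also have "\<dots> = (r j0 * ln (r j0) - p j0 * ln (p j0)) + (\<Sum>j\<in>{..<D} - {j0}. r j * ln (r j) - p j * ln (p j))"
      using j0 by (simp add: sum.remove)
    also have "\<dots> \<le> (t * c0 * ln (2 * t) + t) + (\<Sum>j\<in>{..<D} - {j0}. t)"
      using spec gen by (intro add_mono sum_mono) auto
    also have "\<dots> = t * c0 * ln (2 * t) + t * real D"
      using j0 by (simp add: card_Diff_singleton algebra_simps of_nat_diff)
    also have "\<dots> \<le> - K * t"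
    proof -
      have "t * (c0 * ln (2 * t) + real D) \<le> t * (- K)" using lnt t by (intro mult_left_mono) auto
      then show ?thesis by (simp add: algebra_simps)
    qed
    finally have "ent D r \<le> ent D p - K * t" by simp
    moreover have "sigma e D ((1 - t) *\<^sub>R s + t *\<^sub>R s') \<le> ent D r"
      using sigma_le_ent[OF simr repr_r[symmetric]] .
    ultimately show ?thesis using p(2) by linarith
  qed
  show ?thesis using t00 main by blast
qed



definition sigN :: "(nat \<Rightarrow> 'a::euclidean_space) \<Rightarrow> nat \<Rightarrow> 'a \<Rightarrow> real" where
  "sigN e D s = (if s \<in> newton e D then sigma e D s else 0)"

lemma newton_compact: "compact (newton e D)"
  unfolding newton_def by (intro compact_convex_hull finite_imp_compact) auto

lemma dense_Q: obtains Q :: "'a::euclidean_space set" where "countable Q" "\<And>X. open X \<Longrightarrow> X \<noteq> {} \<Longrightarrow> \<exists>d\<in>Q. d \<in> X"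
  using countable_dense_setE by metis

lemma cont_val:
  assumes "0 < D"
  shows "continuous_on UNIV (\<lambda>\<beta>. s \<bullet> \<beta> - lse e D \<beta>)"
proof -
  have "0 < (\<Sum>j<D. exp (e j \<bullet> \<beta>))" for \<beta>
    using assms by (intro sum_pos) auto
  then have "(\<Sum>j<D. exp (e j \<bullet> \<beta>)) \<noteq> 0" for \<beta> by (metis less_irrefl)
  then show ?thesis unfolding lse_def by (intro continuous_intros) auto
qed

lemma cont_val_s:
  shows "continuous_on UNIV (\<lambda>s. s \<bullet> \<beta> - lse e D \<beta>)"
  by (intro continuous_intros)

lemma sigN_borel: "sigN e D \<in> borel_measurable borel"
proof -
  obtain Q :: "'a set" where Q: "countable Q" "\<And>X. open X \<Longrightarrow> X \<noteq> {} \<Longrightarrow> \<exists>d\<in>Q. d \<in> X"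
    using dense_Q by blast
  let ?N = "newton e D"
  have clN: "closed ?N" using newton_compact compact_imp_closed by blast
  have key: "a < sigma e D s \<longleftrightarrow> (\<exists>\<alpha>\<in>Q. a < s \<bullet> \<alpha> - lse e D \<alpha>)" if s: "s \<in> ?N" for s a
  proof
    assume "a < sigma e D s"
    then obtain \<alpha> where "a < s \<bullet> \<alpha> - lse e D \<alpha>"
      unfolding sigma_alt using less_cSUP_iff[OF _ bdd_sig[OF s]] by auto
    moreover have "open {\<beta>. a < s \<bullet> \<beta> - lse e D \<beta>}"
    proof -
      obtain p where "simw D p" using s newton_iff by blast
      then have "0 < D" by (rule simw_D)
      then show ?thesis using cont_val[of D s e] by (intro open_Collect_less) auto
    qed
    ultimately obtain d where "d \<in> Q" "d \<in> {\<beta>. a < s \<bullet> \<beta> - lse e D \<beta>}" using Q(2) by blast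
    then show "\<exists>\<alpha>\<in>Q. a < s \<bullet> \<alpha> - lse e D \<alpha>" by blast
  next
    assume "\<exists>\<alpha>\<in>Q. a < s \<bullet> \<alpha> - lse e D \<alpha>"
    then show "a < sigma e D s" using sigma_ge_val[OF s] by (meson order_less_le_trans)
  qed
  show ?thesis
  proof (subst borel_measurable_iff_greater, intro allI)
    fix a
    have "{w \<in> space borel. a < sigN e D w} =
        (?N \<inter> (\<Union>\<alpha>\<in>Q. {s. a < s \<bullet> \<alpha> - lse e D \<alpha>})) \<union> (if a < 0 then - ?N else {})"
      using key by (auto simp: sigN_def)
    also have "\<dots> \<in> sets borel"
    proof -
      have "\<And>\<alpha>. {s. a < s \<bullet> \<alpha> - lse e D \<alpha>} \<in> sets borel"
        by (intro borel_open open_Collect_less cont_val_s continuous_on_const)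
      then have "(\<Union>\<alpha>\<in>Q. {s. a < s \<bullet> \<alpha> - lse e D \<alpha>}) \<in> sets borel"
        using Q(1) by (intro sets.countable_UN') auto
      moreover have "?N \<in> sets borel" "- ?N \<in> sets borel" using clN by auto
      ultimately show ?thesis by auto
    qed
    finally show "{w \<in> space borel. a < sigN e D w} \<in> sets borel" .
  qed
qed

lemma meas_AE:
  fixes f g :: "'a::euclidean_space \<Rightarrow> real"
  assumes f: "f \<in> borel_measurable lebesgue" and ae: "AE x in lebesgue. f x = g x"
  shows "g \<in> borel_measurable lebesgue"
proof (subst borel_measurable_iff_greater, intro allI)
  fix a
  have A: "{w \<in> space lebesgue. a < f w} \<in> sets lebesgue" using f borel_measurable_iff_greater by blast
  show "{w \<in> space lebesgue. a < g w} \<in> sets lebesgue"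
    by (rule completion.in_sets_AE[OF _ A]) (use ae in \<open>auto elim!: eventually_mono\<close>)
qed



lemma smooth_deriv_cont:
  assumes "smooth_on UNIV \<phi>"
  shows "continuous_on UNIV (\<lambda>x. frechet_derivative \<phi> (at x) v)"
proof -
  define \<Phi> where "\<Phi> = (\<lambda>F. {h::'a \<Rightarrow> real. continuous_on UNIV h \<and> (\<forall>x\<in>UNIV. h differentiable at x) \<and>
                       (\<forall>v. (\<lambda>x. frechet_derivative h (at x) v) \<in> F)})"
  have mono: "mono \<Phi>" unfolding \<Phi>_def by (rule monoI) auto
  have "\<phi> \<in> gfp \<Phi>" using assms by (simp add: smooth_on_def \<Phi>_def)
  then have "\<phi> \<in> \<Phi> (gfp \<Phi>)" using gfp_unfold[OF mono] by simp
  then have "(\<lambda>x. frechet_derivative \<phi> (at x) v) \<in> gfp \<Phi>" by (simp add: \<Phi>_def)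
  then have "(\<lambda>x. frechet_derivative \<phi> (at x) v) \<in> \<Phi> (gfp \<Phi>)" using gfp_unfold[OF mono] by simp
  then show ?thesis by (simp add: \<Phi>_def)
qed

lemma smooth_grad_cont:
  assumes "smooth_on UNIV \<phi>"
  shows "continuous_on UNIV (grad \<phi>)"
proof -
  have "continuous_on UNIV (\<lambda>x. \<Sum>b\<in>Basis. frechet_derivative \<phi> (at x) b *\<^sub>R b)"
    by (intro continuous_on_sum continuous_on_scaleR smooth_deriv_cont[OF assms] continuous_on_const)
  then show ?thesis by (simp add: grad_def[abs_def])
qed

lemma cont_lebesgue_meas:
  fixes g :: "'a::euclidean_space \<Rightarrow> 'b::euclidean_space"
  assumes "continuous_on UNIV g"
  shows "g \<in> borel_measurable lebesgue"
proof -
  have "g \<in> borel_measurable borel" using assms by (rule borel_measurable_continuous_onI)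
  then have "g \<in> borel_measurable lborel" by simp
  then show ?thesis by (rule measurable_completion)
qed

lemma newton_bounded: obtains B where "0 < B" "\<And>s. s \<in> newton e D \<Longrightarrow> norm s \<le> B"
  using newton_compact[THEN compact_imp_bounded] by (metis bounded_pos)

lemma R_integrable_ind:
  fixes c :: real
  assumes "compact R"
  shows "integrable lebesgue (\<lambda>x::'a::euclidean_space. c * indicator R x)"
proof -
  have "R \<in> lmeasurable" using assms by (rule lmeasurable_compact)
  then have "integrable lebesgue (indicator R :: 'a \<Rightarrow> real)"
    by (intro integrable_real_indicator) (auto simp: fmeasurable_def)
  then show ?thesis by (intro integrable_mult_right)
qed

lemma set_int_flow:
  fixes f g :: "'a::euclidean_space \<Rightarrow> 'a"
  assumes f: "f \<in> borel_measurable lebesgue" and fN: "AE x in lebesgue. f x \<in> newton e D"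
    and R: "compact R" and g: "continuous_on UNIV g"
  shows "integrable lebesgue (\<lambda>x. indicator R x * (f x \<bullet> g x))"
proof -
  obtain B where B: "0 < B" "\<And>s. s \<in> newton e D \<Longrightarrow> norm s \<le> B" using newton_bounded by metis
  have "compact (g ` R)" using R g by (meson compact_continuous_image continuous_on_subset subset_UNIV)
  then obtain G where G: "0 < G" "\<And>y. y \<in> g ` R \<Longrightarrow> norm y \<le> G"
    using compact_imp_bounded bounded_pos by metis
  show ?thesis
  proof (rule Bochner_Integration.integrable_bound[OF R_integrable_ind[OF R, of "B * G"]])
    show "(\<lambda>x. indicator R x * (f x \<bullet> g x)) \<in> borel_measurable lebesgue"
      using R f cont_lebesgue_meas[OF g]
      by (intro borel_measurable_times borel_measurable_inner borel_measurable_indicator)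
         (auto intro: lmeasurable_compact[THEN fmeasurableD])
    show "AE x in lebesgue. norm (indicator R x * (f x \<bullet> g x)) \<le> norm (B * G * indicator R x)"
      using fN
    proof eventually_elim
      case (elim x)
      show ?case
      proof (cases "x \<in> R")
        case True
        have "\<bar>f x \<bullet> g x\<bar> \<le> norm (f x) * norm (g x)" by (rule Cauchy_Schwarz_ineq2)
        also have "\<dots> \<le> B * G" using B G True elim by (intro mult_mono) auto
        finally show ?thesis using True B G by simp
      qed simp
    qed
  qed
qed



lemma AF_integrable:
  assumes R: "compact R" and w: "w \<in> AF e D R w0" and g: "continuous_on UNIV g"
  shows "integrable lebesgue (\<lambda>x. w x \<bullet> g x)"
    and "integrable lebesgue (\<lambda>x. indicator R x * (w x \<bullet> g x))"
proof -
  have wm: "w \<in> borel_measurable lebesgue" and w0: "\<And>x. x \<notin> R \<Longrightarrow> w x = 0"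
    and wN: "AE x in lebesgue. w x \<in> newton e D"
    using w by (auto simp: AF_def asymptotic_flow_def)
  show i: "integrable lebesgue (\<lambda>x. indicator R x * (w x \<bullet> g x))"
    by (rule set_int_flow[OF wm wN R g])
  have "(\<lambda>x. indicator R x * (w x \<bullet> g x)) = (\<lambda>x. w x \<bullet> g x)"
    using w0 by (auto simp: indicator_def fun_eq_iff)
  then show "integrable lebesgue (\<lambda>x. w x \<bullet> g x)" using i by simp
qed

lemma AF_convex:
  fixes w1 w2 :: "'a::euclidean_space \<Rightarrow> 'a"
  assumes R: "compact R" and w1: "w1 \<in> AF e D R w0" and w2: "w2 \<in> AF e D R w0"
    and t: "0 \<le> t" "t \<le> 1"
  shows "(\<lambda>x. (1 - t) *\<^sub>R w1 x + t *\<^sub>R w2 x) \<in> AF e D R w0"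
proof -
  let ?w = "\<lambda>x. (1 - t) *\<^sub>R w1 x + t *\<^sub>R w2 x"
  have m1: "w1 \<in> borel_measurable lebesgue" and z1: "\<And>x. x \<notin> R \<Longrightarrow> w1 x = 0"
    and N1: "AE x in lebesgue. w1 x \<in> newton e D"
    and d1: "\<And>\<phi>. smooth_on UNIV \<phi> \<and> compact (closure {x. \<phi> x \<noteq> 0}) \<and>
           closure {x. \<phi> x \<noteq> 0} \<subseteq> interior R \<Longrightarrow> (LINT x|lebesgue. w1 x \<bullet> grad \<phi> x) = 0"
    and f1: "\<And>\<phi>. smooth_on UNIV \<phi> \<Longrightarrow>
        (LINT x:R|lebesgue. w1 x \<bullet> grad \<phi> x) = (LINT x:R|lebesgue. w0 x \<bullet> grad \<phi> x)"
    using w1 by (auto simp: AF_def asymptotic_flow_def same_flux_def)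
  have m2: "w2 \<in> borel_measurable lebesgue" and z2: "\<And>x. x \<notin> R \<Longrightarrow> w2 x = 0"
    and N2: "AE x in lebesgue. w2 x \<in> newton e D"
    and d2: "\<And>\<phi>. smooth_on UNIV \<phi> \<and> compact (closure {x. \<phi> x \<noteq> 0}) \<and>
           closure {x. \<phi> x \<noteq> 0} \<subseteq> interior R \<Longrightarrow> (LINT x|lebesgue. w2 x \<bullet> grad \<phi> x) = 0"
    and f2: "\<And>\<phi>. smooth_on UNIV \<phi> \<Longrightarrow>
        (LINT x:R|lebesgue. w2 x \<bullet> grad \<phi> x) = (LINT x:R|lebesgue. w0 x \<bullet> grad \<phi> x)"
    using w2 by (auto simp: AF_def asymptotic_flow_def same_flux_def)
  have inner_eq: "?w x \<bullet> grad \<phi> x = (1 - t) * (w1 x \<bullet> grad \<phi> x) + t * (w2 x \<bullet> grad \<phi> x)" for x \<phi>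
    by (simp add: inner_add_left)
  have "?w \<in> borel_measurable lebesgue" using m1 m2 by measurable
  moreover have "\<forall>x. x \<notin> R \<longrightarrow> ?w x = 0" using z1 z2 by simp
  moreover have "AE x in lebesgue. ?w x \<in> newton e D"
    using N1 N2
  proof eventually_elim
    case (elim x)
    then show ?case using newton_convex[of e D] t
      unfolding convex_def by (metis diff_ge_0_iff_ge le_add_diff_inverse2 add.commute)
  qed
  moreover have "(LINT x|lebesgue. ?w x \<bullet> grad \<phi> x) = 0"
    if \<phi>: "smooth_on UNIV \<phi> \<and> compact (closure {x. \<phi> x \<noteq> 0}) \<and> closure {x. \<phi> x \<noteq> 0} \<subseteq> interior R" for \<phi>
  proof -
    have g: "continuous_on UNIV (grad \<phi>)" using \<phi> smooth_grad_cont by blast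
    have "(LINT x|lebesgue. ?w x \<bullet> grad \<phi> x) =
        (1 - t) * (LINT x|lebesgue. w1 x \<bullet> grad \<phi> x) + t * (LINT x|lebesgue. w2 x \<bullet> grad \<phi> x)"
      unfolding inner_eq
      using AF_integrable(1)[OF R w1 g] AF_integrable(1)[OF R w2 g] by simp
    then show ?thesis using d1[OF \<phi>] d2[OF \<phi>] by simp
  qed
  moreover have "(LINT x:R|lebesgue. ?w x \<bullet> grad \<phi> x) = (LINT x:R|lebesgue. w0 x \<bullet> grad \<phi> x)"
    if \<phi>: "smooth_on UNIV \<phi>" for \<phi>
  proof -
    have g: "continuous_on UNIV (grad \<phi>)" using \<phi> smooth_grad_cont by blast
    have "(LINT x:R|lebesgue. ?w x \<bullet> grad \<phi> x) = (LINT x|lebesgue. indicator R x * (?w x \<bullet> grad \<phi> x))"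
      by (simp add: set_lebesgue_integral_def)
    also have "\<dots> = (LINT x|lebesgue. (1 - t) * (indicator R x * (w1 x \<bullet> grad \<phi> x)) + t * (indicator R x * (w2 x \<bullet> grad \<phi> x)))"
      unfolding inner_eq by (simp add: algebra_simps)
    also have "\<dots> = (1 - t) * (LINT x|lebesgue. indicator R x * (w1 x \<bullet> grad \<phi> x)) + t * (LINT x|lebesgue. indicator R x * (w2 x \<bullet> grad \<phi> x))"
      using AF_integrable(2)[OF R w1 g] AF_integrable(2)[OF R w2 g] by simp
    also have "\<dots> = (1 - t) * (LINT x:R|lebesgue. w1 x \<bullet> grad \<phi> x) + t * (LINT x:R|lebesgue. w2 x \<bullet> grad \<phi> x)"
      by (simp add: set_lebesgue_integral_def)
    also have "\<dots> = (LINT x:R|lebesgue. w0 x \<bullet> grad \<phi> x)" using f1[OF \<phi>] f2[OF \<phi>] by (simp add: algebra_simps)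
    finally show ?thesis .
  qed
  ultimately show ?thesis by (auto simp: AF_def asymptotic_flow_def same_flux_def)
qed

lemma sigma_abs: "s \<in> newton e D \<Longrightarrow> \<bar>sigma e D s\<bar> \<le> ln (real D)"
  using sigma_ge[of s e D] sigma_le0[of s e D] by linarith

lemma sig_meas:
  fixes f :: "'a::euclidean_space \<Rightarrow> 'a"
  assumes f: "f \<in> borel_measurable lebesgue" and fN: "AE x in lebesgue. f x \<in> newton e D"
  shows "(\<lambda>x. sigma e D (f x)) \<in> borel_measurable lebesgue"
proof (rule meas_AE)
  show "(\<lambda>x. sigN e D (f x)) \<in> borel_measurable lebesgue"
    using measurable_compose[OF f sigN_borel] by simp
  show "AE x in lebesgue. sigN e D (f x) = sigma e D (f x)"
    using fN by eventually_elim (simp add: sigN_def)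
qed

lemma sig_int:
  fixes f :: "'a::euclidean_space \<Rightarrow> 'a"
  assumes f: "f \<in> borel_measurable lebesgue" and fN: "AE x in lebesgue. f x \<in> newton e D"
    and R: "compact R"
  shows "integrable lebesgue (\<lambda>x. indicator R x * sigma e D (f x))"
proof (rule Bochner_Integration.integrable_bound[OF R_integrable_ind[OF R, of "ln (real D)"]])
  show "(\<lambda>x. indicator R x * sigma e D (f x)) \<in> borel_measurable lebesgue"
    using sig_meas[OF f fN] R
    by (intro borel_measurable_times borel_measurable_indicator) (auto intro: lmeasurable_compact[THEN fmeasurableD])
  show "AE x in lebesgue. norm (indicator R x * sigma e D (f x)) \<le> norm (ln (real D) * indicator R x)"
    using fN
  proof eventually_elim
    case (elim x)
    then show ?case using sigma_abs[OF elim] by (cases "x \<in> R") auto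
  qed
qed



lemma local_int:
  fixes e :: "nat \<Rightarrow> 'a::euclidean_space"
  assumes span_e: "span (e ` {..<D}) = UNIV" and sum_e: "(\<Sum>i<D. e i) = 0"
    and R: "compact R" and w: "w \<in> AF e D R w0" and w': "w' \<in> AF e D R w0"
    and U: "open U" and w'U: "AE y in lebesgue. y \<in> U \<longrightarrow> w' y \<in> interior (newton e D)"
    and wmin: "\<And>w''. w'' \<in> AF e D R w0 \<Longrightarrow>
        (LINT x:R|lebesgue. sigma e D (w x)) \<le> (LINT x:R|lebesgue. sigma e D (w'' x))"
  shows "AE y in lebesgue. y \<in> U \<longrightarrow> y \<in> interior R \<longrightarrow> w y \<in> interior (newton e D)"
proof (rule ccontr)
  let ?N = "newton e D"
  assume notAE: "\<not> (AE y in lebesgue. y \<in> U \<longrightarrow> y \<in> interior R \<longrightarrow> w y \<in> interior ?N)"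
  have m: "w \<in> borel_measurable lebesgue" and wN: "AE x in lebesgue. w x \<in> ?N"
    and z: "\<And>x. x \<notin> R \<Longrightarrow> w x = 0"
    using w by (auto simp: AF_def asymptotic_flow_def)
  have m': "w' \<in> borel_measurable lebesgue" and w'N: "AE x in lebesgue. w' x \<in> ?N"
    using w' by (auto simp: AF_def asymptotic_flow_def)
  have clN: "closed ?N" using newton_compact compact_imp_closed by blast
  have Rl: "R \<in> sets lebesgue" using R by (intro lmeasurable_compact[THEN fmeasurableD])
  have Rf: "R \<in> fmeasurable lebesgue" using R by (rule lmeasurable_compact)
  define B where "B = U \<inter> interior R \<inter> (w -` ?N) \<inter> (w' -` interior ?N) \<inter> (w -` (- interior ?N))"
  have Bsets: "B \<in> sets lebesgue"
  proof -
    have bo: "S \<in> sets lebesgue" if "S \<in> sets borel" for S using that by simp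
    have "w -` ?N \<in> sets lebesgue" using measurable_sets[OF m, of ?N] clN by simp
    moreover have "w' -` interior ?N \<in> sets lebesgue" using measurable_sets[OF m', of "interior ?N"] by simp
    moreover have "w -` (- interior ?N) \<in> sets lebesgue" using measurable_sets[OF m, of "- interior ?N"] by simp
    moreover have "U \<in> sets lebesgue" "interior R \<in> sets lebesgue" using U by (auto intro: bo)
    ultimately show ?thesis unfolding B_def by blast
  qed
  have BR: "B \<subseteq> R" unfolding B_def using interior_subset by blast
  have Bf: "B \<in> fmeasurable lebesgue" by (rule fmeasurableI2[OF Rf BR Bsets])
  have Bnn: "B \<notin> null_sets lebesgue"
  proof
    assume "B \<in> null_sets lebesgue"
    then have "AE y in lebesgue. y \<notin> B" using AE_not_in by blast
    then have "AE y in lebesgue. y \<in> U \<longrightarrow> y \<in> interior R \<longrightarrow> w y \<in> interior ?N"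
      using wN w'U by eventually_elim (auto simp: B_def)
    then show False using notAE by simp
  qed
  define \<mu>B where "\<mu>B = measure lebesgue B"
  have muB: "0 < \<mu>B"
  proof -
    have "emeasure lebesgue B = \<mu>B" using emeasure_eq_measure2[OF Bf] by (simp add: \<mu>B_def)
    moreover have "emeasure lebesgue B \<noteq> 0" using Bnn Bsets by (simp add: null_sets_def)
    ultimately have "\<mu>B \<noteq> 0" by auto
    then show ?thesis using measure_nonneg[of lebesgue B] unfolding \<mu>B_def by linarith
  qed
  define \<mu>R where "\<mu>R = measure lebesgue R"
  define c where "c = ln (real D)"
  have c0: "0 \<le> c" by (cases D) (auto simp: c_def)
  define K where "K = 2 * (c * \<mu>R + 1) / \<mu>B"
  define tm where "tm m = 1 / real (Suc m)" for m
  define wt where "wt t y = (1 - t) *\<^sub>R w y + t *\<^sub>R w' y" for t y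
  have wtm: "wt t \<in> borel_measurable lebesgue" for t unfolding wt_def using m m' by measurable
  define A where "A n = B \<inter> (\<Inter>m\<in>{n..}. {y. sigN e D (wt (tm m) y) \<le> sigN e D (w y) - K * tm m})" for n
  have Asets: "A n \<in> sets lebesgue" for n
  proof -
    have "{y \<in> space lebesgue. sigN e D (wt (tm m) y) \<le> sigN e D (w y) - K * tm m} \<in> sets lebesgue" for m
      using measurable_compose[OF wtm sigN_borel] measurable_compose[OF m sigN_borel] by measurable
    then have "{y. sigN e D (wt (tm m) y) \<le> sigN e D (w y) - K * tm m} \<in> sets lebesgue" for m by simp
    then show ?thesis unfolding A_def using Bsets by (intro sets.Int sets.countable_INT') auto
  qed
  have Ainc: "incseq A" unfolding A_def incseq_def by auto
  have AU: "(\<Union>n. A n) = B"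
  proof
    show "(\<Union>n. A n) \<subseteq> B" unfolding A_def by auto
    show "B \<subseteq> (\<Union>n. A n)"
    proof
      fix y assume y: "y \<in> B"
      then have yN: "w y \<in> ?N" "w y \<notin> interior ?N" "w' y \<in> interior ?N" by (auto simp: B_def)
      have w'N: "w' y \<in> ?N" using yN interior_subset by blast
      obtain t0 where t0: "0 < t0" and sl: "\<And>t. 0 < t \<and> t \<le> t0 \<Longrightarrow>
          sigma e D ((1 - t) *\<^sub>R w y + t *\<^sub>R w' y) \<le> sigma e D (w y) - K * t"
        using inf_slope[OF span_e sum_e yN(1) yN(2) yN(3), of K] by blast
      obtain n where n: "inverse (real (Suc n)) < t0" using reals_Archimedean[OF t0] by blast
      have "y \<in> A n"
        unfolding A_def
      proof (intro IntI InterI y)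
        fix S assume "S \<in> (\<lambda>m. {y. sigN e D (wt (tm m) y) \<le> sigN e D (w y) - K * tm m}) ` {n..}"
        then obtain m where mn: "m \<ge> n" and S: "S = {y. sigN e D (wt (tm m) y) \<le> sigN e D (w y) - K * tm m}" by auto
        have tpos: "0 < tm m" by (simp add: tm_def)
        have "tm m \<le> inverse (real (Suc n))" using mn by (simp add: tm_def field_simps)
        then have tle: "tm m \<le> t0" using n by simp
        have tle1: "tm m \<le> 1" by (simp add: tm_def)
        have "wt (tm m) y \<in> ?N" unfolding wt_def
          using newton_convex[of e D] yN(1) w'N tpos tle1 unfolding convex_def
          by (metis diff_ge_0_iff_ge le_add_diff_inverse2 add.commute less_imp_le)
        then show "y \<in> S" unfolding S using sl[of "tm m"] tpos tle yN(1) by (simp add: sigN_def wt_def)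
      qed
      then show "y \<in> (\<Union>n. A n)" by blast
    qed
  qed
  have lim: "(\<lambda>n. emeasure lebesgue (A n)) \<longlonglongrightarrow> emeasure lebesgue B"
    using Lim_emeasure_incseq[of A lebesgue] Asets Ainc AU by auto
  have "ennreal (\<mu>B / 2) < emeasure lebesgue B"
    using emeasure_eq_measure2[OF Bf] muB by (simp add: \<mu>B_def ennreal_lessI)
  then obtain n where An: "ennreal (\<mu>B / 2) < emeasure lebesgue (A n)"
    using order_tendstoD(1)[OF lim] by (metis eventually_sequentially order_refl)
  have AnB: "A n \<subseteq> B" unfolding A_def by auto
  have Af: "A n \<in> fmeasurable lebesgue" by (rule fmeasurableI2[OF Bf AnB Asets])
  define \<mu>A where "\<mu>A = measure lebesgue (A n)"
  have muA: "\<mu>B / 2 < \<mu>A"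
    using An emeasure_eq_measure2[OF Af] muB by (simp add: \<mu>A_def ennreal_less_iff)
  define t where "t = tm n"
  have t: "0 < t" "t \<le> 1" by (auto simp: t_def tm_def)
  have wtAF: "wt t \<in> AF e D R w0" unfolding wt_def using AF_convex[OF R w w' less_imp_le[OF t(1)] t(2)] .
  have wtN: "AE x in lebesgue. wt t x \<in> ?N"
    using wtAF by (auto simp: AF_def asymptotic_flow_def)
  have i1: "integrable lebesgue (\<lambda>x. indicator R x * sigma e D (w x))" by (rule sig_int[OF m wN R])
  have i2: "integrable lebesgue (\<lambda>x. indicator R x * sigma e D (wt t x))" by (rule sig_int[OF wtm wtN R])
  have i3: "integrable lebesgue (\<lambda>x. indicator R x * sigma e D (w x) + t * (c * indicator R x - (K + c) * indicator (A n) x))"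
  proof -
    have "integrable lebesgue (indicator (A n) :: 'a \<Rightarrow> real)"
      using Af by (intro integrable_real_indicator) (auto simp: fmeasurable_def)
    then have "integrable lebesgue (\<lambda>x. (K + c) * indicator (A n) x)" by (intro integrable_mult_right)
    then have "integrable lebesgue (\<lambda>x. c * indicator R x - (K + c) * indicator (A n) x)"
      using R_integrable_ind[OF R, of c] by (intro Bochner_Integration.integrable_diff)
    then have "integrable lebesgue (\<lambda>x. t * (c * indicator R x - (K + c) * indicator (A n) x))"
      by (intro integrable_mult_right)
    then show ?thesis using i1 by (intro Bochner_Integration.integrable_add)
  qed
  have "(LINT x:R|lebesgue. sigma e D (w x)) \<le> (LINT x:R|lebesgue. sigma e D (wt t x))"
    by (rule wmin[OF wtAF])
  also have "\<dots> = (LINT x|lebesgue. indicator R x * sigma e D (wt t x))"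
    by (simp add: set_lebesgue_integral_def)
  also have "\<dots> \<le> (LINT x|lebesgue. indicator R x * sigma e D (w x) + t * (c * indicator R x - (K + c) * indicator (A n) x))"
  proof (rule integral_mono_AE[OF i2 i3])
    show "AE x in lebesgue. indicator R x * sigma e D (wt t x)
        \<le> indicator R x * sigma e D (w x) + t * (c * indicator R x - (K + c) * indicator (A n) x)"
      using wN w'N
    proof eventually_elim
      case (elim y)
      show ?case
      proof (cases "y \<in> R")
        case False
        then have "y \<notin> A n" using AnB BR by blast
        then show ?thesis using False by simp
      next
        case yR: True
        show ?thesis
        proof (cases "y \<in> A n")
          case True
          have "y \<in> {y. sigN e D (wt (tm n) y) \<le> sigN e D (w y) - K * tm n}"
            using True unfolding A_def by blast
          moreover have "wt (tm n) y \<in> ?N" using wtN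
            unfolding wt_def t_def
            using newton_convex[of e D] elim t unfolding convex_def t_def
            by (metis diff_ge_0_iff_ge le_add_diff_inverse2 add.commute less_imp_le)
          ultimately have "sigma e D (wt t y) \<le> sigma e D (w y) - K * t"
            using elim by (simp add: sigN_def t_def)
          then show ?thesis using True yR by (simp add: algebra_simps)
        next
          case False
          have "sigma e D (wt t y) \<le> (1 - t) * sigma e D (w y) + t * sigma e D (w' y)"
            unfolding wt_def using sigma_convex[OF elim(1) elim(2)] t by simp
          moreover have "sigma e D (w' y) \<le> 0" using sigma_le0[OF elim(2)] .
          moreover have "- c \<le> sigma e D (w y)" using sigma_ge[OF elim(1)] by (simp add: c_def)
          ultimately have "sigma e D (wt t y) \<le> sigma e D (w y) + t * c"
          proof -
            assume a1: "sigma e D (wt t y) \<le> (1 - t) * sigma e D (w y) + t * sigma e D (w' y)"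
              and a2: "sigma e D (w' y) \<le> 0" and a3: "- c \<le> sigma e D (w y)"
            have "t * (sigma e D (w' y) - sigma e D (w y)) \<le> t * c"
              using a2 a3 t by (intro mult_left_mono) auto
            moreover have "(1 - t) * sigma e D (w y) + t * sigma e D (w' y) = sigma e D (w y) + t * (sigma e D (w' y) - sigma e D (w y))"
              by (simp add: algebra_simps)
            ultimately show ?thesis using a1 by linarith
          qed
          then show ?thesis using False yR by simp
        qed
      qed
    qed
  qed
  also have "\<dots> = (LINT x|lebesgue. indicator R x * sigma e D (w x)) + t * (c * \<mu>R - (K + c) * \<mu>A)"
  proof -
    have "integrable lebesgue (indicator (A n) :: 'a \<Rightarrow> real)"
      using Af by (intro integrable_real_indicator) (auto simp: fmeasurable_def)
    moreover have "integrable lebesgue (indicator R :: 'a \<Rightarrow> real)"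
      using Rf by (intro integrable_real_indicator) (auto simp: fmeasurable_def)
    ultimately show ?thesis using i1 by (simp add: \<mu>R_def \<mu>A_def)
  qed
  also have "\<dots> = (LINT x:R|lebesgue. sigma e D (w x)) + t * (c * \<mu>R - (K + c) * \<mu>A)"
    by (simp add: set_lebesgue_integral_def)
  finally have le: "0 \<le> t * (c * \<mu>R - (K + c) * \<mu>A)" by simp
  have "K * \<mu>A > K * (\<mu>B / 2)"
  proof -
    have "0 \<le> c * \<mu>R" using c0 measure_nonneg[of lebesgue R] by (simp add: \<mu>R_def)
    then have "0 < 2 * (c * \<mu>R + 1)" by simp
    then have "0 < K" using muB unfolding K_def by (rule divide_pos_pos)
    then show ?thesis using muA by simp
  qed
  moreover have "K * (\<mu>B / 2) = c * \<mu>R + 1" using muB by (simp add: K_def)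
  moreover have "0 \<le> c * \<mu>A" using c0 by (simp add: \<mu>A_def)
  ultimately have "c * \<mu>R - (K + c) * \<mu>A < 0" by (simp add: algebra_simps)
  then have "t * (c * \<mu>R - (K + c) * \<mu>A) < 0" using t by (simp add: mult_pos_neg)
  then show False using le by simp
qed



theorem mainTheorem14:
  fixes e :: "nat \<Rightarrow> 'a::euclidean_space" and D :: nat
    and R :: "'a set" and \<omega>0 \<omega> :: "'a \<Rightarrow> 'a"
  assumes span_e: "span (e ` {..<D}) = UNIV"
    and sum_e: "(\<Sum>i<D. e i) = 0"
    and R_compact: "compact R" and R_connected: "connected R"
    and R_domain: "closure (interior R) = R"
    and R_boundary: "piecewise_smooth_boundary R"
    and b_flow: "asymptotic_flow e D R \<omega>0"
    and flex: "flexible e D R \<omega>0"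
    and \<omega>_AF: "\<omega> \<in> AF e D R \<omega>0"
    and \<omega>_min: "\<And>\<omega>'. \<omega>' \<in> AF e D R \<omega>0 \<Longrightarrow>
        (LINT x:R|lebesgue. sigma e D (\<omega> x)) \<le> (LINT x:R|lebesgue. sigma e D (\<omega>' x))"
  shows "AE x in lebesgue. x \<in> interior R \<longrightarrow> \<omega> x \<in> interior (newton e D)"
proof -
  define F where "F = {U. open U \<and> (\<exists>\<omega>'\<in>AF e D R \<omega>0. AE y in lebesgue. y \<in> U \<longrightarrow> \<omega>' y \<in> interior (newton e D))}"
  have Fopen: "\<And>S. S \<in> F \<Longrightarrow> open S" by (auto simp: F_def)
  obtain F' where F': "F' \<subseteq> F" "countable F'" "\<Union>F' = \<Union>F" using Lindelof[OF Fopen] by metis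
  have cover: "interior R \<subseteq> \<Union>F"
  proof
    fix x assume "x \<in> interior R"
    then obtain U where "open U" "x \<in> U"
      "\<exists>\<omega>'\<in>AF e D R \<omega>0. AE y in lebesgue. y \<in> U \<longrightarrow> \<omega>' y \<in> interior (newton e D)"
      using flex unfolding flexible_def by blast
    then show "x \<in> \<Union>F" by (auto simp: F_def)
  qed
  have loc: "AE y in lebesgue. y \<in> U \<longrightarrow> y \<in> interior R \<longrightarrow> \<omega> y \<in> interior (newton e D)"
    if "U \<in> F" for U
  proof -
    from that obtain \<omega>' where U: "open U" and w': "\<omega>' \<in> AF e D R \<omega>0"
      and w'U: "AE y in lebesgue. y \<in> U \<longrightarrow> \<omega>' y \<in> interior (newton e D)"
      by (auto simp: F_def)
    show ?thesis by (rule local_int[OF span_e sum_e R_compact \<omega>_AF w' U w'U \<omega>_min])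
  qed
  have "AE y in lebesgue. \<forall>U\<in>F'. y \<in> U \<longrightarrow> y \<in> interior R \<longrightarrow> \<omega> y \<in> interior (newton e D)"
    using F' loc by (subst AE_ball_countable) auto
  then show ?thesis
  proof eventually_elim
    case (elim y)
    show ?case
    proof
      assume "y \<in> interior R"
      then have "y \<in> \<Union>F'" using cover F'(3) by blast
      then show "\<omega> y \<in> interior (newton e D)" using elim \<open>y \<in> interior R\<close> by blast
    qed
  qed
qed

end
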